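(* Let $H=\operatorname{diag}(\lambda_1,\dots,\lambda_n)$ with $\lambda_1\ge\dots\ge\lambda_{n-p}\ge0>\lambda_{n-p+1}\ge\dots\ge\lambda_n$ for some $1\le p<n$, let $L=\max(\lambda_1,-\lambda_n)$ and $0<\alpha<1/L$. Let $(\gamma_k)_{k\ge1}$, $(\beta_k)_{k\ge1}$ be sequences in $[0,1]$ with $\gamma_{k+1}\ge\gamma_k$ and $\beta_{k+1}\ge\beta_k$ for all $k$, and let $\bar\gamma=\lim_{k\to\infty}\gamma_k$, $\bar\beta=\lim_{k\to\infty}\beta_k$. For $i$ with $\lambda_i<0$ define $b_{i,0}=0$ and, for $k\ge1$, \[ b_{i,k}=(\beta_k+\gamma_k\alpha|\lambda_i|)\Big(1-\frac{1}{1+b_{i,k-1}}\Big)+\alpha|\lambda_i|. \] Then for all $i$ with $\lambda_i<0$, $\lim_{k\to\infty}b_{i,k}=\bar b_i$, where \[ \bar b_i=\tfrac12\big(\bar\beta-1+\alpha|\lambda_i|(1+\bar\gamma)\big)+\tfrac12\sqrt{\big(\bar\beta-1+\alpha|\lambda_i|(1+\bar\gamma)\big)^2+4\alpha|\lambda_i|}. \]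
   Context: The quantities $b_{i,k}$ describe the per-iteration growth factors $x_i^{k+1}=x_i^0\prod_{m=0}^k(1+b_{i,m})$ of the components along negative-curvature directions for the accelerated gradient iteration $y^k=x^k+\gamma_k(x^k-x^{k-1})$, $x^{k+1}=x^k+\beta_k(x^k-x^{k-1})-\alpha Hy^k$, $x^0=x^1$, applied to $f(x)=\frac12x^THx$. *)

theory Defs
  imports Complex_Main
begin

primrec growth_b :: "real \<Rightarrow> (nat \<Rightarrow> real) \<Rightarrow> (nat \<Rightarrow> real) \<Rightarrow> real \<Rightarrow> nat \<Rightarrow> real" where
  "growth_b alpha beta gamma lam 0 = 0"
| "growth_b alpha beta gamma lam (Suc k) =
     (beta (Suc k) + gamma (Suc k) * alpha * \<bar>lam\<bar>) * (1 - 1 / (1 + growth_b alpha beta gamma lam k))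
     + alpha * \<bar>lam\<bar>"

end

theory Submission
  imports Defs
begin

lemma mono_conv:
  fixes f :: "nat \<Rightarrow> real"
  assumes "\<And>k. 1 \<le> k \<Longrightarrow> f k \<le> f (Suc k)" "\<And>k. 1 \<le> k \<Longrightarrow> f k \<le> 1"
  shows "f \<longlonglongrightarrow> lim f"
proof -
  have inc: "incseq (\<lambda>k. f (Suc k))"
    by (rule incseq_SucI) (use assms(1) in auto)
  have "\<forall>i. f (Suc i) \<le> 1" using assms(2) by simp
  from incseq_convergent[OF inc this]
  obtain L where "(\<lambda>k. f (Suc k)) \<longlonglongrightarrow> L" by blast
  then have "f \<longlonglongrightarrow> L" by (rule LIMSEQ_imp_Suc)
  then show ?thesis using limI by blast
qed

lemma main:
  fixes alpha x :: real and beta gamma :: "nat \<Rightarrow> real"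
  assumes ax: "0 < alpha * x" and x: "x = \<bar>lm\<bar>"
    and gamma_range: "\<And>k. 1 \<le> k \<Longrightarrow> 0 \<le> gamma k \<and> gamma k \<le> 1"
    and beta_range: "\<And>k. 1 \<le> k \<Longrightarrow> 0 \<le> beta k \<and> beta k \<le> 1"
    and gamma_mono: "\<And>k. 1 \<le> k \<Longrightarrow> gamma k \<le> gamma (Suc k)"
    and beta_mono: "\<And>k. 1 \<le> k \<Longrightarrow> beta k \<le> beta (Suc k)"
  shows "growth_b alpha beta gamma lm \<longlonglongrightarrow>
              (1/2) * (lim beta - 1 + alpha * x * (1 + lim gamma))
              + (1/2) * sqrt ((lim beta - 1 + alpha * x * (1 + lim gamma))\<^sup>2
                              + 4 * alpha * x)"
proof -
  define a where "a = alpha * x"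
  define b where "b = growth_b alpha beta gamma lm"
  define c where "c = (\<lambda>k. beta k + gamma k * a)"
  have a0: "a > 0" using ax a_def by simp
  have bS: "b (Suc k) = c (Suc k) * (1 - 1 / (1 + b k)) + a" for k
    by (simp add: b_def c_def a_def x mult.assoc)
  have c0: "c (Suc k) \<ge> 0" for k
    using beta_range[of "Suc k"] gamma_range[of "Suc k"] a0 by (simp add: c_def)
  have c1: "c (Suc k) \<le> 1 + a" for k
    using beta_range[of "Suc k"] gamma_range[of "Suc k"] a0
    by (simp add: c_def) (smt (verit) mult_left_le_one_le)
  have cm: "c (Suc k) \<le> c (Suc (Suc k))" for k
    using beta_mono[of "Suc k"] gamma_mono[of "Suc k"] a0
    by (simp add: c_def mult_right_mono add_mono)
  have g0: "y \<ge> 0 \<Longrightarrow> 0 \<le> 1 - 1 / (1 + y)" for y :: real by (simp add: field_simps)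
  have g1: "y \<ge> 0 \<Longrightarrow> 1 - 1 / (1 + y) \<le> 1" for y :: real by (simp add: field_simps)
  have gm: "0 \<le> y \<Longrightarrow> y \<le> z \<Longrightarrow> 1 - 1 / (1 + y) \<le> 1 - 1 / (1 + z)" for y z :: real
    by (simp add: frac_le)
  have b0': "b k \<ge> 0" for k
  proof (induction k)
    case 0 then show ?case by (simp add: b_def)
  next
    case (Suc m) show ?case using bS[of m] c0[of m] g0[OF Suc] a0 by simp
  qed
  have inc: "b k \<le> b (Suc k)" for k
  proof (induction k)
    case 0 then show ?case using bS[of 0] a0 by (simp add: b_def)
  next
    case (Suc m)
    have "c (Suc m) * (1 - 1 / (1 + b m)) \<le> c (Suc (Suc m)) * (1 - 1 / (1 + b (Suc m)))"
      by (rule mult_mono) (use cm c0 gm[OF b0' Suc] g0[OF b0'] in auto)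
    then show ?case using bS[of m] bS[of "Suc m"] by simp
  qed
  have bnd: "b k \<le> 1 + 2 * a" for k
  proof (cases k)
    case 0 then show ?thesis using a0 by (simp add: b_def)
  next
    case (Suc m)
    have "c (Suc m) * (1 - 1 / (1 + b m)) \<le> (1 + a) * 1"
      by (rule mult_mono) (use c1 c0 g1[OF b0'] g0[OF b0'] a0 in auto)
    then show ?thesis using bS[of m] Suc by simp
  qed
  have incb: "incseq b" using inc by (rule incseq_SucI)
  obtain l where bl: "b \<longlonglongrightarrow> l"
  proof -
    have "\<forall>i. b i \<le> 1 + 2 * a" using bnd by blast
    from incseq_convergent[OF incb this] show ?thesis using that by blast
  qed
  have l0: "l \<ge> 0" using b0' bl by (meson LIMSEQ_le_const)
  have bet: "beta \<longlonglongrightarrow> lim beta" by (rule mono_conv) (use beta_mono beta_range in auto)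
  have gam: "gamma \<longlonglongrightarrow> lim gamma" by (rule mono_conv) (use gamma_mono gamma_range in auto)
  define C where "C = lim beta + lim gamma * a"
  have "c \<longlonglongrightarrow> C" unfolding c_def C_def by (intro tendsto_intros bet gam)
  then have "(\<lambda>k. c (Suc k)) \<longlonglongrightarrow> C" by (rule LIMSEQ_Suc)
  then have "(\<lambda>k. c (Suc k) * (1 - 1 / (1 + b k)) + a) \<longlonglongrightarrow> C * (1 - 1 / (1 + l)) + a"
    using l0 by (intro tendsto_intros bl) auto
  moreover have "(\<lambda>k. b (Suc k)) \<longlonglongrightarrow> l" using bl by (rule LIMSEQ_Suc)
  ultimately have eq: "l = C * (1 - 1 / (1 + l)) + a" using bS LIMSEQ_unique by simp
  define s where "s = lim beta - 1 + a * (1 + lim gamma)"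
  have quad: "l * l - s * l - a = 0"
  proof -
    have "l * (1 + l) = C * l + a * (1 + l)" using eq l0
      by (simp add: field_simps)
    then show ?thesis by (simp add: s_def C_def algebra_simps)
  qed
  have sq: "(2 * l - s)\<^sup>2 = s\<^sup>2 + 4 * a" using quad by (simp add: power2_eq_square algebra_simps)
  have sabs: "sqrt (s\<^sup>2 + 4 * a) = \<bar>2 * l - s\<bar>" by (simp add: sq[symmetric])
  have "sqrt (s\<^sup>2) < sqrt (s\<^sup>2 + 4 * a)" using a0 by (intro real_sqrt_less_mono) simp
  then have gt: "\<bar>s\<bar> < sqrt (s\<^sup>2 + 4 * a)" by simp
  have "2 * l - s = sqrt (s\<^sup>2 + 4 * a)" using sabs gt l0 by linarith
  then have "l = (1/2) * s + (1/2) * sqrt (s\<^sup>2 + 4 * a)" by simp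
  then have "l = (1/2) * (lim beta - 1 + alpha * x * (1 + lim gamma))
              + (1/2) * sqrt ((lim beta - 1 + alpha * x * (1 + lim gamma))\<^sup>2
                              + 4 * alpha * x)" unfolding s_def a_def by (simp only: mult.assoc)
  then show ?thesis using bl unfolding b_def by (simp only:)
qed

theorem theorem4p2:
  fixes lam :: "nat \<Rightarrow> real" and n p :: nat and alpha :: real
    and beta gamma :: "nat \<Rightarrow> real"
  assumes p_range: "1 \<le> p" "p < n"
    and sorted: "\<And>i j. 1 \<le> i \<Longrightarrow> i \<le> j \<Longrightarrow> j \<le> n \<Longrightarrow> lam j \<le> lam i"
    and nonneg: "lam (n - p) \<ge> 0"
    and neg: "lam (n - p + 1) < 0"
    and alpha_pos: "0 < alpha"
    and alpha_lt: "alpha < 1 / max (lam 1) (- lam n)"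
    and gamma_range: "\<And>k. 1 \<le> k \<Longrightarrow> 0 \<le> gamma k \<and> gamma k \<le> 1"
    and beta_range: "\<And>k. 1 \<le> k \<Longrightarrow> 0 \<le> beta k \<and> beta k \<le> 1"
    and gamma_mono: "\<And>k. 1 \<le> k \<Longrightarrow> gamma k \<le> gamma (Suc k)"
    and beta_mono: "\<And>k. 1 \<le> k \<Longrightarrow> beta k \<le> beta (Suc k)"
  shows "\<forall>i. 1 \<le> i \<and> i \<le> n \<and> lam i < 0 \<longrightarrow>
           (growth_b alpha beta gamma (lam i) \<longlonglongrightarrow>
              (1/2) * (lim beta - 1 + alpha * \<bar>lam i\<bar> * (1 + lim gamma))
              + (1/2) * sqrt ((lim beta - 1 + alpha * \<bar>lam i\<bar> * (1 + lim gamma))\<^sup>2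
                              + 4 * alpha * \<bar>lam i\<bar>))"
proof (intro allI impI)
  fix i assume h: "1 \<le> i \<and> i \<le> n \<and> lam i < 0"
  have "0 < alpha * \<bar>lam i\<bar>" using h alpha_pos by (simp add: mult_pos_neg)
  then show "growth_b alpha beta gamma (lam i) \<longlonglongrightarrow>
              (1/2) * (lim beta - 1 + alpha * \<bar>lam i\<bar> * (1 + lim gamma))
              + (1/2) * sqrt ((lim beta - 1 + alpha * \<bar>lam i\<bar> * (1 + lim gamma))\<^sup>2
                              + 4 * alpha * \<bar>lam i\<bar>)"
    by (rule main[of alpha "\<bar>lam i\<bar>" "lam i" gamma beta, OF _ refl gamma_range beta_range gamma_mono beta_mono])
qed

end
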